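(* Let $\Gamma$ be a $\mathbb Z^d$-periodic graph whose fundamental graph $\Gamma_*=(V_*,\mathcal E_* )$ is bipartite with parts $V_1,V_2$ (every edge of $\Gamma_*$ joins a vertex of $V_1$ to a vertex of $V_2$), and suppose $m=\#V_1-\#V_2>0$. Then $\{1\}$ is a degenerate spectral band of the normalized Laplacian $\Delta$ on $\Gamma$, of multiplicity at least $m$ (i.e. for every $\vartheta\in\mathbb T^d$, $1$ is an eigenvalue of $\Delta(\vartheta)$ of multiplicity at least $m$).
   Context: A $\mathbb Z^d$-periodic graph is a connected infinite graph $\Gamma=(V,\mathcal E)$, possibly with loops and multiple edges, on which $\mathbb Z^d$ acts freely by graph automorphisms, with finite vertex degrees and finite quotient graph $\Gamma_*=\Gamma/\mathbb Z^d=(V_*,\mathcal E_* )$. Each undirected edge is regarded as two oppositely oriented edges; $\mathcal A$ is the set of oriented edges, $\mathcal A_*=\mathcal A/\mathbb Z^d$; $\varkappa_v$ is the number of oriented edges starting at $v$. $(\Delta f)(v)=f(v)-\sum_{(v,u)\in\mathcal A}\frac{f(u)}{\sqrt{\varkappa_v\varkappa_u}}$ on $\ell^2(V)$. Fix a subtree of $\Gamma$ whose vertex set $V_0$ consists of $\#V_*$ pairwise non-equivalent vertices; write $v=v_0+[v]$ with $v_0\in V_0$, $[v]\in\mathbb Z^d$; edge index $\tau(u,v)=[v]-[u]$, defined on $\mathcal A_*$. For $\vartheta\in\mathbb T^d=\mathbb R^d/(2\pi\mathbb Z)^d$, $(\Delta(\vartheta)f)(v)=f(v)-\sum_{\mathbf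 e=(v,u)\in\mathcal A_*}\frac{e^{i\langle\tau(\mathbf e),\vartheta\rangle}}{\sqrt{\varkappa_v\varkappa_u}}f(u)$ on $\ell^2(V_* )$; $\Delta$ is unitarily equivalent to the direct integral of $\Delta(\vartheta)$ over $\mathbb T^d$. A degenerate band $\{\lambda_*\}$ of $\Delta$ means $\lambda_*$ is an eigenvalue of $\Delta$ of infinite multiplicity (equivalently an eigenvalue of $\Delta(\vartheta)$ for all $\vartheta$); its multiplicity is the multiplicity of $\lambda_*$ as an eigenvalue of $\Delta(\vartheta)$ for almost every $\vartheta$. *)

theory Defs
  imports "HOL-Analysis.Analysis" "Jordan_Normal_Form.Matrix_Kernel" "Jordan_Normal_Form.Char_Poly"
begin

text \<open>Fundamental graph data: vertices V_* = {0..<n}; oriented edges E (finite set);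
  src/tgt; rv is the orientation reversal; tau e :: 'd => int is the edge index in Z^d.\<close>

definition periodic_data ::
  "nat \<Rightarrow> 'e set \<Rightarrow> ('e \<Rightarrow> nat) \<Rightarrow> ('e \<Rightarrow> nat) \<Rightarrow> ('e \<Rightarrow> 'e) \<Rightarrow> ('e \<Rightarrow> ('d::finite) \<Rightarrow> int) \<Rightarrow> bool" where
  "periodic_data n E src tgt rv tau \<longleftrightarrow>
     finite E \<and>
     (\<forall>e\<in>E. src e < n \<and> tgt e < n \<and> rv e \<in> E \<and> rv e \<noteq> e \<and> rv (rv e) = e \<and>
             src (rv e) = tgt e \<and> tgt (rv e) = src e \<and> tau (rv e) = - tau e)"

definition periodic_adj ::
  "'e set \<Rightarrow> ('e \<Rightarrow> nat) \<Rightarrow> ('e \<Rightarrow> nat) \<Rightarrow> ('e \<Rightarrow> 'd \<Rightarrow> int) \<Rightarrow> ((nat \<times> ('d \<Rightarrow> int)) \<times> (nat \<times> ('d \<Rightarrow> int))) set" where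
  "periodic_adj E src tgt tau =
     {((v,k),(u,l)). \<exists>e\<in>E. src e = v \<and> tgt e = u \<and> l = (\<lambda>i. k i + tau e i)}"

definition periodic_connected ::
  "nat \<Rightarrow> 'e set \<Rightarrow> ('e \<Rightarrow> nat) \<Rightarrow> ('e \<Rightarrow> nat) \<Rightarrow> ('e \<Rightarrow> 'd \<Rightarrow> int) \<Rightarrow> bool" where
  "periodic_connected n E src tgt tau \<longleftrightarrow>
     (\<forall>v k u l. v < n \<longrightarrow> u < n \<longrightarrow> ((v,k),(u,l)) \<in> (periodic_adj E src tgt tau)\<^sup>*)"

definition kappa :: "'e set \<Rightarrow> ('e \<Rightarrow> nat) \<Rightarrow> nat \<Rightarrow> nat" where
  "kappa E src v = card {e\<in>E. src e = v}"

definition Delta_theta ::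
  "nat \<Rightarrow> 'e set \<Rightarrow> ('e \<Rightarrow> nat) \<Rightarrow> ('e \<Rightarrow> nat) \<Rightarrow> ('e \<Rightarrow> ('d::finite) \<Rightarrow> int) \<Rightarrow> ('d \<Rightarrow> real) \<Rightarrow> complex mat" where
  "Delta_theta n E src tgt tau \<theta> =
     mat n n (\<lambda>(v,u). (if v = u then 1 else 0) -
        (\<Sum>e\<in>{e\<in>E. src e = v \<and> tgt e = u}.
            cis (\<Sum>i\<in>UNIV. real_of_int (tau e i) * \<theta> i)
            / complex_of_real (sqrt (real (kappa E src v) * real (kappa E src u)))))"

end

theory Submission imports Defs "Jordan_Normal_Form.DL_Rank" begin

lemma kernel_dim_mono:
  fixes A B :: "'a::field mat"
  assumes A: "A \<in> carrier_mat nr n" and B: "B \<in> carrier_mat nr' n"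
   and sub: "mat_kernel A \<subseteq> mat_kernel B"
  shows "kernel_dim A \<le> kernel_dim B"
proof -
  interpret KA: kernel nr n A by (unfold_locales, rule A)
  interpret KB: kernel nr' n B by (unfold_locales, rule B)
  have fa: "KA.Ker.fin_dim"
  proof -
    from kernel_basis_exists[OF A] obtain C where "finite C" "KA.basis C" by auto
    then show ?thesis unfolding KA.Ker.fin_dim_def KA.Ker.basis_def by auto
  qed
  have fb: "KB.Ker.fin_dim"
  proof -
    from kernel_basis_exists[OF B] obtain C where "finite C" "KB.basis C" by auto
    then show ?thesis unfolding KB.Ker.fin_dim_def KB.Ker.basis_def by auto
  qed
  have s: "subspace class_ring (mat_kernel A) KB.VK"
  proof (intro subspace.intro submodule.intro)
    show "vectorspace class_ring KB.VK" by (rule KB.Ker.vectorspace_axioms)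
    show "module class_ring KB.VK" by (rule KB.Ker.module_axioms)
    show "mat_kernel A \<subseteq> carrier KB.VK" using sub by simp
    fix v w assume "v \<in> mat_kernel A" "w \<in> mat_kernel A"
    then show "v \<oplus>\<^bsub>KB.VK\<^esub> w \<in> mat_kernel A" using KA.Ker.a_closed by simp
  next
    show "\<zero>\<^bsub>KB.VK\<^esub> \<in> mat_kernel A" using KA.Ker.zero_closed by simp
  next
    fix c :: 'a and v assume "c \<in> carrier class_ring" "v \<in> mat_kernel A"
    then show "c \<odot>\<^bsub>KB.VK\<^esub> v \<in> mat_kernel A" using KA.Ker.smult_closed by simp
  qed
  have "vectorspace.dim class_ring (KB.Ker.vs (mat_kernel A)) \<le> KB.dim"
    apply (rule KB.Ker.subspace_dim[OF s fb])
    using fa by simp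
  then show ?thesis using A B by simp
qed

lemma kernel_dim_ge:
  fixes A :: "'a::field mat"
  assumes A: "A \<in> carrier_mat nr nc"
  shows "nc - nr \<le> kernel_dim A"
proof -
  let ?B = "gauss_jordan_single A"
  from gauss_jordan_single[OF A refl]
  obtain P Q where AB: "?B = P * A" and B: "?B \<in> carrier_mat nr nc" 
    and row: "row_echelon_form ?B" by auto
  from row obtain f where f: "pivot_fun ?B f nc" unfolding row_echelon_form_def using B by auto
  have "length (pivot_positions ?B) = card { i. i < nr \<and> row ?B i \<noteq> 0\<^sub>v nc}"
    by (rule pivot_positions(4)[OF B f])
  also have "\<dots> \<le> card {..<nr}" by (rule card_mono) auto
  finally have "length (pivot_positions ?B) \<le> nr" by simp
  then show ?thesis unfolding kernel_dim_code using A by auto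
qed

lemma bip_kernel:
  fixes M :: "'a::field mat"
  assumes M: "M \<in> carrier_mat n n" and V: "V1 \<union> V2 = {0..<n}" "V1 \<inter> V2 = {}"
    and z: "\<forall>v\<in>V1. \<forall>u\<in>V1. M $$ (v,u) = 0"
  shows "card V1 - card V2 \<le> kernel_dim M"
proof -
  define k where "k = card V2"
  have fin2: "finite V2" and fin1: "finite V1" using V(1) by (metis finite_Un finite_atLeastLessThan)+
  have n: "n = card V1 + k" unfolding k_def using card_Un_disjoint[OF fin1 fin2 V(2)] V(1) by simp
  obtain w where w: "bij_betw w {0..<k} V2" using ex_bij_betw_nat_finite[OF fin2] unfolding k_def by blast
  define N where "N = mat (2*k) n (\<lambda>(i,j). if i < k then M $$ (w i, j) else if j = w (i - k) then 1 else 0)"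
  have N: "N \<in> carrier_mat (2*k) n" unfolding N_def by simp
  have sub: "mat_kernel N \<subseteq> mat_kernel M"
  proof
    fix x assume xk: "x \<in> mat_kernel N"
    have x: "x \<in> carrier_vec n" and Nx: "N *\<^sub>v x = 0\<^sub>v (2*k)" using mat_kernelD[OF N xk] by auto
    have Ni: "(N *\<^sub>v x) $ i = (\<Sum>j<n. N $$ (i,j) * x $ j)" if "i < 2*k" for i
      using that x N by (auto simp: scalar_prod_def row_def lessThan_atLeast0 mult.commute)
    have Mi: "(M *\<^sub>v x) $ i = (\<Sum>j<n. M $$ (i,j) * x $ j)" if "i < n" for i
      using that x M by (auto simp: scalar_prod_def row_def lessThan_atLeast0 mult.commute)
    have a: "x $ u = 0" if u: "u \<in> V2" for u
    proof -
      obtain i where i: "i < k" "w i = u" using w u unfolding bij_betw_def by auto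
      have un: "u < n" using u V(1) by auto
      have "0 = (N *\<^sub>v x) $ (k + i)" using Nx i by simp
      also have "\<dots> = (\<Sum>j<n. (if j = u then x $ j else 0))"
        using i by (subst Ni, simp, intro sum.cong) (auto simp: N_def)
      also have "\<dots> = x $ u" using un by simp
      finally show ?thesis by simp
    qed
    have b: "(M *\<^sub>v x) $ v = 0" if v: "v \<in> V2" for v
    proof -
      obtain i where i: "i < k" "w i = v" using w v unfolding bij_betw_def by auto
      have vn: "v < n" using v V(1) by auto
      have "(M *\<^sub>v x) $ v = (\<Sum>j<n. M $$ (v,j) * x $ j)" using Mi vn by simp
      also have "\<dots> = (N *\<^sub>v x) $ i"
        using i by (subst Ni) (auto simp: N_def intro!: sum.cong)
      also have "\<dots> = 0" using Nx i by simp
      finally show ?thesis .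
    qed
    have c: "(M *\<^sub>v x) $ v = 0" if v: "v \<in> V1" for v
    proof -
      have vn: "v < n" using v V(1) by auto
      have "(M *\<^sub>v x) $ v = (\<Sum>j<n. M $$ (v,j) * x $ j)" using Mi vn by simp
      also have "\<dots> = 0"
      proof (rule sum.neutral, rule ballI)
        fix j assume "j \<in> {..<n}"
        then have "j \<in> V1 \<or> j \<in> V2" using V(1) by auto
        then show "M $$ (v,j) * x $ j = 0" using z v a by auto
      qed
      finally show ?thesis .
    qed
    have "M *\<^sub>v x = 0\<^sub>v n"
    proof (rule eq_vecI)
      fix i assume "i < dim_vec (0\<^sub>v n :: 'a vec)"
      then have "i \<in> V1 \<or> i \<in> V2" using V(1) by auto
      then show "(M *\<^sub>v x) $ i = 0\<^sub>v n $ i" using b c \<open>i < dim_vec (0\<^sub>v n :: 'a vec)\<close> by auto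
    qed (use M in auto)
    then show "x \<in> mat_kernel M" by (rule mat_kernelI[OF M x])
  qed
  have "n - 2*k \<le> kernel_dim N" by (rule kernel_dim_ge[OF N])
  also have "\<dots> \<le> kernel_dim M" by (rule kernel_dim_mono[OF N M sub])
  finally show ?thesis using n k_def by simp
qed

theorem theorem5p1:
  fixes n :: nat and E :: "'e set" and src tgt :: "'e \<Rightarrow> nat" and rv :: "'e \<Rightarrow> 'e"
    and tau :: "'e \<Rightarrow> ('d::finite) \<Rightarrow> int" and V1 V2 :: "nat set"
  assumes "periodic_data n E src tgt rv tau"
    and "periodic_connected n E src tgt tau"
    and "V1 \<union> V2 = {0..<n}" and "V1 \<inter> V2 = {}"
    and "\<forall>e\<in>E. (src e \<in> V1 \<and> tgt e \<in> V2) \<or> (src e \<in> V2 \<and> tgt e \<in> V1)"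
    and "int (card V1) - int (card V2) > 0"
  shows "\<forall>\<theta> :: 'd \<Rightarrow> real.
           eigenvalue (Delta_theta n E src tgt tau \<theta>) 1 \<and>
           kernel_dim (Delta_theta n E src tgt tau \<theta> - 1\<^sub>m n) \<ge> nat (int (card V1) - int (card V2))"
proof
  fix \<theta> :: "'d \<Rightarrow> real"
  define D where "D = Delta_theta n E src tgt tau \<theta>"
  define M where "M = D - 1\<^sub>m n"
  have D: "D \<in> carrier_mat n n" unfolding D_def Delta_theta_def by simp
  have M: "M \<in> carrier_mat n n" unfolding M_def by (rule minus_carrier_mat) simp
  have z: "\<forall>v\<in>V1. \<forall>u\<in>V1. M $$ (v,u) = 0"
  proof (intro ballI)
    fix v u assume v: "v \<in> V1" and u: "u \<in> V1"
    have vn: "v < n" "u < n" using v u assms(3) by auto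
    have e: "{e\<in>E. src e = v \<and> tgt e = u} = {}" using assms(4,5) v u by blast
    show "M $$ (v,u) = 0" unfolding M_def D_def using vn D
      by (simp add: Delta_theta_def e)
  qed
  have kd: "card V1 - card V2 \<le> kernel_dim M" by (rule bip_kernel[OF M assms(3,4) z])
  have kd2: "nat (int (card V1) - int (card V2)) \<le> kernel_dim M" using kd by simp
  have pos: "kernel_dim M > 0" using kd assms(6) by simp
  have "\<exists>x. x \<in> mat_kernel M \<and> x \<noteq> 0\<^sub>v n"
  proof (rule ccontr)
    assume nt: "\<not> (\<exists>x. x \<in> mat_kernel M \<and> x \<noteq> 0\<^sub>v n)"
    have "mat_kernel M \<subseteq> mat_kernel (1\<^sub>m n :: complex mat)"
    proof
      fix y assume y: "y \<in> mat_kernel M"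
      then have "y = 0\<^sub>v n" using nt by blast
      then show "y \<in> mat_kernel (1\<^sub>m n :: complex mat)"
        by (intro mat_kernelI[of _ n n]) auto
    qed
    from kernel_dim_mono[OF M one_carrier_mat this] have "kernel_dim M \<le> kernel_dim (1\<^sub>m n :: complex mat)" by simp
    also have "\<dots> = 0" using kernel_one_mat(1)[of n] unfolding kernel_dim_def by simp
    finally show False using pos by simp
  qed
  then obtain x where xk: "x \<in> mat_kernel M" and x0: "x \<noteq> 0\<^sub>v n" by blast
  have x: "x \<in> carrier_vec n" and Mx: "M *\<^sub>v x = 0\<^sub>v n" using mat_kernelD[OF M xk] by auto
  have "D *\<^sub>v x - x = 0\<^sub>v n" using Mx unfolding M_def
    by (subst (asm) minus_mult_distrib_mat_vec[OF D _ x]) (auto simp: one_mult_mat_vec[OF x])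
  then have eq: "D *\<^sub>v x - x = 0\<^sub>v n" .
  have "D *\<^sub>v x = 1 \<cdot>\<^sub>v x"
  proof (rule eq_vecI)
    fix i assume i: "i < dim_vec (1 \<cdot>\<^sub>v x)"
    then have iN: "i < n" using x by simp
    from arg_cong[OF eq, of "\<lambda>v. v $ i"] have "(D *\<^sub>v x) $ i - x $ i = 0" using iN D x by simp
    then show "(D *\<^sub>v x) $ i = (1 \<cdot>\<^sub>v x) $ i" using iN x by simp
  qed (use D x in simp)
  then have "eigenvector D x 1" unfolding eigenvector_def using D x x0 by simp
  then have "eigenvalue D 1" unfolding eigenvalue_def by blast
  then show "eigenvalue (Delta_theta n E src tgt tau \<theta>) 1 \<and>
           kernel_dim (Delta_theta n E src tgt tau \<theta> - 1\<^sub>m n) \<ge> nat (int (card V1) - int (card V2))"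
    using kd2 unfolding M_def D_def by simp
qed
end
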